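(* Let $N\geq3$, $a_c=\frac{N-2}{2}$, $a<a_c$, $a\leq b<a+1$, and $p=\frac{N+2(1+a-b)}{N-2(1+a-b)}$. There exist constants $0<c_1\leq c_2$ (depending only on $N,a,b$) such that for all $\tau_1,\tau_2>0$ with $\tau_1\neq\tau_2$, $$c_1\Big(\frac{\min\{\tau_1,\tau_2\}}{\max\{\tau_1,\tau_2\}}\Big)^{a_c-a}\leq\langle W_{\tau_1},W_{\tau_2}\rangle_{D^{1,2}_a(\mathbb{R}^N)}\leq c_2\Big(\frac{\min\{\tau_1,\tau_2\}}{\max\{\tau_1,\tau_2\}}\Big)^{a_c-a}.$$ Equivalently, on the cylinder, $c_1e^{-(a_c-a)|s_1-s_2|}\leq\langle\Psi_{s_1},\Psi_{s_2}\rangle_{H^1(\mathcal{C})}\leq c_2e^{-(a_c-a)|s_1-s_2|}$ for all $s_1\neq s_2$.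
   Context: $D^{1,2}_a(\mathbb{R}^N)=\{u\in\dot W^{1,2}(\mathbb{R}^N)\mid\int|x|^{-2a}|\nabla u|^2<\infty\}$ with inner product $\langle u,v\rangle_{D^{1,2}_a}=\int|x|^{-2a}\nabla u\cdot\nabla v\,dx$. $W(x)=(2(p+1)(a_c-a)^2)^{\frac{1}{p-1}}(1+|x|^{(a_c-a)(p-1)})^{-\frac{2}{p-1}}$, $W_\tau(x)=\tau^{a_c-a}W(\tau x)$. $\mathcal{C}=\mathbb{R}\times\mathbb{S}^{N-1}$, $H^1(\mathcal{C})$ with inner product $\int_{\mathcal{C}}(\nabla w\cdot\nabla v+(a_c-a)^2wv)d\mu$; $\Psi(t)=\big(\frac{(p+1)(a_c-a)^2}{2}\big)^{\frac{1}{p-1}}\big(\cosh(\frac{(a_c-a)(p-1)}{2}t)\big)^{-\frac{2}{p-1}}$, $\Psi_s(t)=\Psi(t-s)$; $\Psi_{s}$ corresponds to $W_\tau$ with $s=\ln\tau$ under the isometry $u(x)=|x|^{-(a_c-a)}v(-\ln|x|,x/|x|)$ between $D^{1,2}_a(\mathbb{R}^N)$ and $H^1(\mathcal{C})$. *)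

theory Defs
  imports "HOL-Analysis.Analysis"
begin

definition a_crit :: "nat \<Rightarrow> real" where
  "a_crit N = (real N - 2) / 2"

definition p_exp :: "nat \<Rightarrow> real \<Rightarrow> real \<Rightarrow> real" where
  "p_exp N a b = (real N + 2 * (1 + a - b)) / (real N - 2 * (1 + a - b))"

text \<open>The extremal function W on R^N (N = DIM('a)).\<close>
definition W_fun :: "nat \<Rightarrow> real \<Rightarrow> real \<Rightarrow> 'a::euclidean_space \<Rightarrow> real" where
  "W_fun N a b x =
     (let p = p_exp N a b; d = a_crit N - a in
      (2 * (p + 1) * d\<^sup>2) powr (1 / (p - 1)) *
      (1 + norm x powr (d * (p - 1))) powr (- 2 / (p - 1)))"

definition W_tau :: "nat \<Rightarrow> real \<Rightarrow> real \<Rightarrow> real \<Rightarrow> 'a::euclidean_space \<Rightarrow> real" where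
  "W_tau N a b \<tau> x = \<tau> powr (a_crit N - a) * W_fun N a b (\<tau> *\<^sub>R x)"

text \<open>Classical gradient (defined wherever the function is Frechet differentiable).\<close>
definition grad :: "('a::real_inner \<Rightarrow> real) \<Rightarrow> 'a \<Rightarrow> 'a" where
  "grad f x = (SOME D. GDERIV f x :> D)"

definition D12a_inner :: "real \<Rightarrow> ('a::euclidean_space \<Rightarrow> real) \<Rightarrow> ('a \<Rightarrow> real) \<Rightarrow> real" where
  "D12a_inner a u v = (\<integral>x. norm x powr (- 2 * a) * (grad u x \<bullet> grad v x) \<partial>lborel)"

end

theory Submission
  imports Defs "HOL-Real_Asymp.Real_Asymp"
begin


definition rdens :: "nat \<Rightarrow> real \<Rightarrow> real" where
  "rdens n r = (if 0 \<le> r then real n * unit_ball_vol (real n) * r ^ (n - 1) else 0)"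

lemma rdens_nonneg: "0 \<le> rdens n r"
  by (simp add: rdens_def)

lemma radial_measure:
  "distr (lborel :: 'a::euclidean_space measure) borel norm = density lborel (\<lambda>r. ennreal (rdens DIM('a) r))"
proof -
  have SB: "sets (borel::real measure) = sigma_sets UNIV (range atMost)"
    by (subst borel_eq_atMost) simp
  show ?thesis
proof (rule measure_eqI_generator_eq_countable[where E="range atMost" and \<Omega>=UNIV and A="range (\<lambda>n::nat. {..real n})"])
  show "Int_stable (range atMost :: real set set)"
    by (auto simp: Int_stable_def)
  show "range atMost \<subseteq> Pow (UNIV :: real set)" by auto
  show "sets (distr lborel borel norm) = sigma_sets UNIV (range atMost)"
    using SB by simp
  show "sets (density lborel (\<lambda>r. ennreal (rdens DIM('a) r))) = sigma_sets UNIV (range atMost)"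
    using SB by simp
  show "range (\<lambda>n::nat. {..real n}) \<subseteq> range atMost" by auto
  show "\<Union> (range (\<lambda>n::nat. {..real n})) = UNIV"
    by (auto intro: real_arch_simple)
  show "countable (range (\<lambda>n::nat. {..real n}))" by auto
  have M1: "emeasure (distr (lborel :: 'a measure) borel norm) {..x} = (if x < 0 then 0 else ennreal (unit_ball_vol DIM('a) * x ^ DIM('a)))" for x
  proof -
    have "emeasure (distr (lborel :: 'a measure) borel norm) {..x} = emeasure lborel (norm -` {..x} :: 'a set)"
      by (subst emeasure_distr) auto
    also have "(norm -` {..x} :: 'a set) = (if x < 0 then {} else cball 0 x)"
      by (auto simp: cball_def dest: order_trans[OF norm_ge_zero])
    finally show ?thesis by (auto simp: emeasure_cball)
  qed
  have M2: "emeasure (density lborel (\<lambda>r. ennreal (rdens DIM('a) r))) {..x} = (if x < 0 then 0 else ennreal (unit_ball_vol DIM('a) * x ^ DIM('a)))" for x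
  proof -
    have "emeasure (density lborel (\<lambda>r. ennreal (rdens DIM('a) r))) {..x} = (\<integral>\<^sup>+r. ennreal (rdens DIM('a) r) * indicator {..x} r \<partial>lborel)"
      by (subst emeasure_density) (auto simp: rdens_def)
    also have "\<dots> = (\<integral>\<^sup>+r. ennreal (real DIM('a) * unit_ball_vol DIM('a) * r ^ (DIM('a) - 1)) * indicator {0..x} r \<partial>lborel)"
      by (intro nn_integral_cong) (auto simp: rdens_def indicator_def)
    also have "\<dots> = (if x < 0 then 0 else ennreal (unit_ball_vol DIM('a) * x ^ DIM('a)))"
    proof (cases "x < 0")
      case True then show ?thesis by simp
    next
      case False
      have "(\<integral>\<^sup>+r. ennreal (real DIM('a) * unit_ball_vol DIM('a) * r ^ (DIM('a) - 1)) * indicator {0..x} r \<partial>lborel)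
         = ennreal (unit_ball_vol DIM('a) * x ^ DIM('a) - unit_ball_vol DIM('a) * 0 ^ DIM('a))"
        using False
        by (intro nn_integral_FTC_Icc) (auto intro!: derivative_eq_intros simp: algebra_simps)
      then show ?thesis using False by simp
    qed
    finally show ?thesis .
  qed
  show "emeasure (distr (lborel :: 'a measure) borel norm) X = emeasure (density lborel (\<lambda>r. ennreal (rdens DIM('a) r))) X"
    if XR: "X \<in> range atMost" for X
  proof -
    obtain x where "X = {..x}" using XR by blast
    then show ?thesis using M1[of x] M2[of x] by simp
  qed
  show "\<And>X. X \<in> range (\<lambda>n::nat. {..real n}) \<Longrightarrow> emeasure (distr (lborel :: 'a measure) borel norm) X \<noteq> \<infinity>"
    using M1 by auto
qed
qed

lemma radial_nn_integral:
  assumes [measurable]: "g \<in> borel_measurable borel"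
  shows "(\<integral>\<^sup>+x. g (norm x) \<partial>(lborel :: 'a::euclidean_space measure)) = (\<integral>\<^sup>+r. ennreal (rdens DIM('a) r) * g r \<partial>lborel)"
proof -
  have "(\<integral>\<^sup>+x. g (norm x) \<partial>(lborel :: 'a measure)) = (\<integral>\<^sup>+r. g r \<partial>distr (lborel :: 'a measure) borel norm)"
    by (subst nn_integral_distr) auto
  also have "\<dots> = (\<integral>\<^sup>+r. ennreal (rdens DIM('a) r) * g r \<partial>lborel)"
    unfolding radial_measure by (subst nn_integral_density) (auto simp: rdens_def)
  finally show ?thesis .
qed




definition phi :: "real \<Rightarrow> real \<Rightarrow> real \<Rightarrow> real \<Rightarrow> real \<Rightarrow> real" where
  "phi C0 d q e s = 2 * C0 * d * s powr (q - 1) * (1 + s powr q) powr (e - 1)"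

lemma phi_nonneg: "0 < C0 \<Longrightarrow> 0 < d \<Longrightarrow> 0 \<le> phi C0 d q e s"
  by (simp add: phi_def)

lemma phi_deriv:
  assumes "0 < r" "0 < \<tau>" "q * e = - 2 * d"
  shows "DERIV (\<lambda>r. C0 * (1 + (\<tau> * r) powr q) powr e) r :> - (\<tau> * phi C0 d q e (\<tau> * r))"
proof -
  have pos: "0 < \<tau> * r" using assms by simp
  have d1: "DERIV (\<lambda>r. \<tau> * r) r :> \<tau>"
    by (auto intro!: derivative_eq_intros)
  have d2: "DERIV (\<lambda>r. (\<tau> * r) powr q) r :> q * (\<tau> * r) powr (q - 1) * \<tau>"
    using DERIV_fun_powr[OF d1 pos, of q] by simp
  have d3: "DERIV (\<lambda>r. 1 + (\<tau> * r) powr q) r :> q * (\<tau> * r) powr (q - 1) * \<tau>"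
    using DERIV_add[OF DERIV_const d2] by simp
  have p2: "0 < 1 + (\<tau> * r) powr q" by (simp add: add_pos_nonneg)
  have d4: "DERIV (\<lambda>r. (1 + (\<tau> * r) powr q) powr e) r :> e * (1 + (\<tau> * r) powr q) powr (e - 1) * (q * (\<tau> * r) powr (q - 1) * \<tau>)"
    using DERIV_fun_powr[OF d3 p2, of e] by simp
  have d5: "DERIV (\<lambda>r. C0 * (1 + (\<tau> * r) powr q) powr e) r :> C0 * (e * (1 + (\<tau> * r) powr q) powr (e - 1) * (q * (\<tau> * r) powr (q - 1) * \<tau>))"
    using DERIV_cmult[OF d4, of C0] by simp
  have "C0 * (e * (1 + (\<tau> * r) powr q) powr (e - 1) * (q * (\<tau> * r) powr (q - 1) * \<tau>))
      = C0 * (q * e) * \<tau> * (\<tau> * r) powr (q - 1) * (1 + (\<tau> * r) powr q) powr (e - 1)"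
    by (simp add: algebra_simps)
  also have "\<dots> = - (\<tau> * phi C0 d q e (\<tau> * r))"
    using assms(3) by (simp add: phi_def algebra_simps)
  finally show ?thesis using d5 by simp
qed

lemma phi_upper:
  assumes "0 < s" "0 < C0" "0 < d" "0 < q" "e < 0" "q * e = - 2 * d"
  shows "s powr (2 * d + 1) * phi C0 d q e s \<le> 2 * C0 * d"
proof -
  have "(1 + s powr q) powr (e - 1) \<le> (s powr q) powr (e - 1)"
    using assms by (intro powr_mono2') auto
  hence "s powr (2 * d + 1) * phi C0 d q e s \<le> 2 * C0 * d * (s powr (2 * d + 1) * s powr (q - 1) * (s powr q) powr (e - 1))"
    using assms by (simp add: phi_def mult_left_mono)
  also have "s powr (2 * d + 1) * s powr (q - 1) * (s powr q) powr (e - 1) = s powr (2 * d + 1 + (q - 1) + q * (e - 1))"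
    by (simp only: powr_add powr_powr mult.assoc)
  also have "2 * d + 1 + (q - 1) + q * (e - 1) = 0"
    using assms(6) by (simp add: algebra_simps)
  finally show ?thesis using assms by simp
qed

lemma phi_lower:
  assumes "1 \<le> s" "0 < C0" "0 < d" "0 < q" "e < 0" "q * e = - 2 * d"
  shows "2 * C0 * d * 2 powr (e - 1) \<le> s powr (2 * d + 1) * phi C0 d q e s"
proof -
  have s0: "0 < s" using assms by simp
  have "1 \<le> s powr q" using assms by (simp add: ge_one_powr_ge_zero)
  hence "(2 * s powr q) powr (e - 1) \<le> (1 + s powr q) powr (e - 1)"
    using assms by (intro powr_mono2') auto
  hence "2 * C0 * d * (s powr (2 * d + 1) * s powr (q - 1) * (2 * s powr q) powr (e - 1)) \<le> s powr (2 * d + 1) * phi C0 d q e s"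
    using assms by (simp add: phi_def mult_left_mono)
  also have "s powr (2 * d + 1) * s powr (q - 1) * (2 * s powr q) powr (e - 1) = 2 powr (e - 1) * s powr (2 * d + 1 + (q - 1) + q * (e - 1))"
    using s0 by (simp only: powr_add powr_powr powr_mult mult_ac)
  also have "2 * d + 1 + (q - 1) + q * (e - 1) = 0"
    using assms(6) by (simp add: algebra_simps)
  finally show ?thesis using assms by simp
qed

lemma phi_integral:
  assumes "0 < \<tau>" "0 < C0" "0 < d" "0 < q" "e < 0" "q * e = - 2 * d"
  shows "(\<integral>\<^sup>+r. ennreal (phi C0 d q e (\<tau> * r)) * indicator {0<..} r \<partial>lborel) = ennreal (C0 / \<tau>)"
proof -
  define F where "F r = - (C0 * (1 + (\<tau> * r) powr q) powr e) / \<tau>" for r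
  define f where "f r = phi C0 d q e (\<tau> * r)" for r
  have FD: "DERIV F x :> f x" if "0 < ereal x" "ereal x < \<infinity>" for x
  proof -
    have "0 < x" using that by simp
    from DERIV_cdivide[OF DERIV_minus[OF phi_deriv[OF this assms(1) assms(6), of C0]], of \<tau>]
    show ?thesis using assms(1) by (simp add: F_def[abs_def] f_def)
  qed
  have fc: "isCont f x" if "0 < ereal x" "ereal x < \<infinity>" for x
  proof -
    have "0 < x" using that by simp
    then show ?thesis using assms(1)
      unfolding f_def phi_def by (intro continuous_intros) (auto, smt (verit) powr_ge_zero)
  qed
  have A: "((F \<circ> real_of_ereal) \<longlongrightarrow> - C0 / \<tau>) (at_right 0)"
  proof -
    have "((\<lambda>r. (\<tau> * r) powr q) \<longlongrightarrow> 0) (at_right (0::real))"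
      using assms by (intro tendsto_zero_powrI[where g="\<lambda>_. q" and b=q]) (auto intro!: tendsto_eq_intros eventually_at_rightI[of 0 1])
    hence "(F \<longlongrightarrow> - (C0 * (1 + 0) powr e) / \<tau>) (at_right 0)"
      unfolding F_def using assms(1) by (intro tendsto_intros) auto
    then show ?thesis unfolding zero_ereal_def ereal_tendsto_simps by simp
  qed
  have B: "((F \<circ> real_of_ereal) \<longlongrightarrow> 0) (at_left \<infinity>)"
  proof -
    have "filterlim (\<lambda>r. \<tau> * r) at_top at_top"
      using assms by (intro filterlim_tendsto_pos_mult_at_top[OF tendsto_const]) (auto simp: filterlim_ident)
    hence "filterlim (\<lambda>r. (\<tau> * r) powr q) at_top at_top"
      using assms by (intro filterlim_compose[OF real_powr_at_top]) auto
    hence "filterlim (\<lambda>r. 1 + (\<tau> * r) powr q) at_top at_top"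
      by (intro filterlim_tendsto_add_at_top[OF tendsto_const])
    hence "((\<lambda>r. (1 + (\<tau> * r) powr q) powr e) \<longlongrightarrow> 0) at_top"
      using assms by (intro tendsto_neg_powr) auto
    hence "(F \<longlongrightarrow> - (C0 * 0) / \<tau>) at_top"
      unfolding F_def using assms(1) by (intro tendsto_intros) auto
    then show ?thesis unfolding ereal_tendsto_simps by simp
  qed
  have fnn: "AE x in lborel. 0 < ereal x \<longrightarrow> ereal x < \<infinity> \<longrightarrow> 0 \<le> f x"
    using assms by (auto simp: f_def phi_nonneg)
  have I1: "set_integrable lborel (einterval 0 \<infinity>) f"
    and I2: "(LBINT x=0..\<infinity>. f x) = 0 - (- C0 / \<tau>)"
    using interval_integral_FTC_nonneg[OF _ FD fc fnn A B] by auto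
  have E: "einterval 0 \<infinity> = {0<..}"
    by (auto simp: einterval_def zero_ereal_def)
  have int: "integrable lborel (\<lambda>x. indicator {0<..} x * f x)"
    using I1 unfolding E set_integrable_def by simp
  have val: "(\<integral>x. indicator {0<..} x * f x \<partial>lborel) = C0 / \<tau>"
    using I2 unfolding interval_lebesgue_integral_0_infty set_lebesgue_integral_def by simp
  have "(\<integral>\<^sup>+r. ennreal (phi C0 d q e (\<tau> * r)) * indicator {0<..} r \<partial>lborel) = (\<integral>\<^sup>+r. ennreal (indicator {0<..} r * f r) \<partial>lborel)"
    by (intro nn_integral_cong) (auto simp: f_def indicator_def)
  also have "\<dots> = ennreal (\<integral>x. indicator {0<..} x * f x \<partial>lborel)"
    using assms by (intro nn_integral_eq_integral int) (auto simp: f_def phi_nonneg indicator_def)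
  finally show ?thesis using val by simp
qed




definition Gf :: "real \<Rightarrow> real \<Rightarrow> real \<Rightarrow> real \<Rightarrow> real \<Rightarrow> real \<Rightarrow> real \<Rightarrow> real \<Rightarrow> real" where
  "Gf a C0 d q e \<tau>1 \<tau>2 r = r powr (- 2 * a) *
     ((\<tau>1 powr d * (\<tau>1 * phi C0 d q e (\<tau>1 * r))) * (\<tau>2 powr d * (\<tau>2 * phi C0 d q e (\<tau>2 * r))))"

lemma Gf_sym: "Gf a C0 d q e \<tau>1 \<tau>2 r = Gf a C0 d q e \<tau>2 \<tau>1 r"
  by (simp add: Gf_def mult_ac)

lemma Gf_measurable [measurable]: "Gf a C0 d q e \<tau>1 \<tau>2 \<in> borel_measurable borel"
  unfolding Gf_def phi_def by measurable

context
  fixes N :: nat and a d q e C0 :: real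
  assumes dN: "2 * d + 1 = real N - 1 - 2 * a" and N1: "1 \<le> N"
    and d0: "0 < d" and q0: "0 < q" and e0: "e < 0" and qe: "q * e = - 2 * d" and C0: "0 < C0"
begin

lemma key_identity:
  assumes "0 < r" "0 < \<tau>1" "0 < \<tau>2"
  shows "rdens N r * Gf a C0 d q e \<tau>1 \<tau>2 r =
    real N * unit_ball_vol (real N) * (\<tau>1 powr (- d) * \<tau>2 powr (d + 1)) *
    (((\<tau>1 * r) powr (2 * d + 1) * phi C0 d q e (\<tau>1 * r)) * phi C0 d q e (\<tau>2 * r))"
proof -
  have "r powr (real (N - 1)) = r ^ (N - 1)"
    using assms by (intro powr_realpow)
  moreover have "real (N - 1) = real N - 1" using N1 by (simp add: of_nat_diff)
  ultimately have "r ^ (N - 1) = r powr (real N - 1)" by simp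
  moreover have "r powr (2 * d + 1) = r powr (real N - 1) * r powr (- 2 * a)"
  proof -
    have "2 * d + 1 = (real N - 1) + (- 2 * a)" using dN by linarith
    then show ?thesis by (metis powr_add)
  qed
  ultimately have 1: "r ^ (N - 1) * r powr (- 2 * a) = r powr (2 * d + 1)" by simp
  have 2: "(\<tau>1 * r) powr (2 * d + 1) = \<tau>1 powr (2 * d + 1) * r powr (2 * d + 1)"
    using assms by (simp add: powr_mult)
  have 3: "\<tau>1 powr (- d) * \<tau>1 powr (2 * d + 1) = \<tau>1 powr d * \<tau>1"
  proof -
    have "\<tau>1 powr (- d) * \<tau>1 powr (2 * d + 1) = \<tau>1 powr (- d + (2 * d + 1))" by (simp only: powr_add)
    also have "- d + (2 * d + 1) = d + 1" by simp
    also have "\<tau>1 powr (d + 1) = \<tau>1 powr d * \<tau>1" using assms by (simp add: powr_add)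
    finally show ?thesis .
  qed
  have 4: "\<tau>2 powr d * \<tau>2 = \<tau>2 powr (d + 1)"
    using assms by (simp add: powr_add)
  have "rdens N r * Gf a C0 d q e \<tau>1 \<tau>2 r =
     real N * unit_ball_vol (real N) * (r ^ (N - 1) * r powr (- 2 * a)) *
     ((\<tau>1 powr d * \<tau>1) * phi C0 d q e (\<tau>1 * r)) * ((\<tau>2 powr d * \<tau>2) * phi C0 d q e (\<tau>2 * r))"
    using assms by (simp add: rdens_def Gf_def mult_ac)
  also have "\<dots> = real N * unit_ball_vol (real N) * r powr (2 * d + 1) *
     ((\<tau>1 powr (- d) * \<tau>1 powr (2 * d + 1)) * phi C0 d q e (\<tau>1 * r)) * (\<tau>2 powr (d + 1) * phi C0 d q e (\<tau>2 * r))"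
    unfolding 1 3 4 ..
  also have "\<dots> = real N * unit_ball_vol (real N) * (\<tau>1 powr (- d) * \<tau>2 powr (d + 1)) *
    ((\<tau>1 powr (2 * d + 1) * r powr (2 * d + 1) * phi C0 d q e (\<tau>1 * r)) * phi C0 d q e (\<tau>2 * r))"
    by (simp add: mult_ac)
  finally show ?thesis unfolding 2 .
qed

lemma H_zero: "r \<le> 0 \<Longrightarrow> rdens N r * Gf a C0 d q e \<tau>1 \<tau>2 r = 0"
  by (cases "r = 0") (auto simp: rdens_def Gf_def)

lemma H_nonneg: "0 < \<tau>1 \<Longrightarrow> 0 < \<tau>2 \<Longrightarrow> 0 \<le> rdens N r * Gf a C0 d q e \<tau>1 \<tau>2 r"
  using C0 d0 by (auto simp: rdens_def Gf_def phi_nonneg intro!: mult_nonneg_nonneg)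

definition c2 where "c2 = real N * unit_ball_vol (real N) * (2 * C0 * d) * C0"
definition cL where "cL = real N * unit_ball_vol (real N) * (2 * C0 * d * 2 powr (e - 1)) *
   (2 * C0 * d * 2 powr (e - 1) * 2 powr (- (2 * d + 1)))"

lemma c2_pos: "0 < c2" using C0 d0 N1 by (simp add: c2_def)
lemma cL_pos: "0 < cL" using C0 d0 N1 by (simp add: cL_def)

lemma J_upper:
  assumes "0 < \<tau>2" "\<tau>2 < \<tau>1"
  shows "(\<integral>\<^sup>+r. ennreal (rdens N r * Gf a C0 d q e \<tau>1 \<tau>2 r) \<partial>lborel) \<le> ennreal (c2 * (\<tau>2 / \<tau>1) powr d)"
proof -
  have t1: "0 < \<tau>1" using assms by simp
  define c where "c = real N * unit_ball_vol (real N) * (\<tau>1 powr (- d) * \<tau>2 powr (d + 1)) * (2 * C0 * d)"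
  have c0: "0 \<le> c" using C0 d0 by (simp add: c_def)
  have pw: "rdens N r * Gf a C0 d q e \<tau>1 \<tau>2 r \<le> c * (phi C0 d q e (\<tau>2 * r) * indicator {0<..} r)" for r
  proof (cases "0 < r")
    case True
    have "(\<tau>1 * r) powr (2 * d + 1) * phi C0 d q e (\<tau>1 * r) \<le> 2 * C0 * d"
      using True t1 C0 d0 q0 e0 qe by (intro phi_upper) auto
    hence "real N * unit_ball_vol (real N) * (\<tau>1 powr (- d) * \<tau>2 powr (d + 1)) *
      (((\<tau>1 * r) powr (2 * d + 1) * phi C0 d q e (\<tau>1 * r)) * phi C0 d q e (\<tau>2 * r))
      \<le> real N * unit_ball_vol (real N) * (\<tau>1 powr (- d) * \<tau>2 powr (d + 1)) *
      ((2 * C0 * d) * phi C0 d q e (\<tau>2 * r))"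
      using C0 d0 by (intro mult_left_mono mult_right_mono phi_nonneg) auto
    then show ?thesis using True t1 assms
      by (simp add: key_identity c_def mult_ac)
  next
    case False
    have h: "rdens N r * Gf a C0 d q e \<tau>1 \<tau>2 r = 0" using False by (intro H_zero) simp
    have "indicator {0<..} r = (0::real)" using False by simp
    then show ?thesis unfolding h by simp
  qed
  have "(\<integral>\<^sup>+r. ennreal (rdens N r * Gf a C0 d q e \<tau>1 \<tau>2 r) \<partial>lborel)
     \<le> (\<integral>\<^sup>+r. ennreal c * (ennreal (phi C0 d q e (\<tau>2 * r)) * indicator {0<..} r) \<partial>lborel)"
  proof (intro nn_integral_mono)
    fix r
    have "ennreal (rdens N r * Gf a C0 d q e \<tau>1 \<tau>2 r) \<le> ennreal (c * (phi C0 d q e (\<tau>2 * r) * indicator {0<..} r))"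
      using pw by (intro ennreal_leI)
    also have "\<dots> = ennreal c * (ennreal (phi C0 d q e (\<tau>2 * r)) * indicator {0<..} r)"
      using c0 C0 d0 by (auto simp: indicator_def ennreal_mult phi_nonneg)
    finally show "ennreal (rdens N r * Gf a C0 d q e \<tau>1 \<tau>2 r) \<le> ennreal c * (ennreal (phi C0 d q e (\<tau>2 * r)) * indicator {0<..} r)" .
  qed
  also have "\<dots> = ennreal c * (\<integral>\<^sup>+r. ennreal (phi C0 d q e (\<tau>2 * r)) * indicator {0<..} r \<partial>lborel)"
    by (intro nn_integral_cmult) (auto simp: phi_def)
  also have "\<dots> = ennreal c * ennreal (C0 / \<tau>2)"
    using assms C0 d0 q0 e0 qe by (subst phi_integral) auto
  also have "\<dots> = ennreal (c * (C0 / \<tau>2))"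
    using c0 C0 assms by (subst ennreal_mult[symmetric]) auto
  also have "c * (C0 / \<tau>2) = c2 * (\<tau>1 powr (- d) * (\<tau>2 powr (d + 1) / \<tau>2))"
    by (simp add: c_def c2_def)
  also have "\<tau>2 powr (d + 1) / \<tau>2 = \<tau>2 powr d"
    using assms by (simp add: powr_add)
  also have "\<tau>1 powr (- d) * \<tau>2 powr d = (\<tau>2 / \<tau>1) powr d"
  proof -
    have "(\<tau>2 / \<tau>1) powr d = \<tau>2 powr d / \<tau>1 powr d" by (metis powr_divide less_eq_real_def assms(1) t1)
    then show ?thesis by (simp add: powr_minus field_simps)
  qed
  finally show ?thesis .
qed

lemma J_lower:
  assumes "0 < \<tau>2" "\<tau>2 < \<tau>1"
  shows "ennreal (cL * (\<tau>2 / \<tau>1) powr d) \<le> (\<integral>\<^sup>+r. ennreal (rdens N r * Gf a C0 d q e \<tau>1 \<tau>2 r) \<partial>lborel)"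
proof -
  have t1: "0 < \<tau>1" using assms by simp
  define c where "c = cL * (\<tau>1 powr (- d) * \<tau>2 powr (d + 1))"
  have c0: "0 \<le> c" using cL_pos by (simp add: c_def)
  have pw: "c * indicator {1/\<tau>2..2/\<tau>2} r \<le> rdens N r * Gf a C0 d q e \<tau>1 \<tau>2 r" for r
  proof (cases "r \<in> {1/\<tau>2..2/\<tau>2}")
    case True
    have r0: "0 < r" using True assms by (auto intro: less_le_trans[of 0 "1/\<tau>2"])
    have "1 \<le> \<tau>2 * r" using True assms by (auto simp: field_simps)
    moreover have "\<tau>2 * r \<le> 2" using True assms by (auto simp: field_simps)
    ultimately have s1: "1 \<le> \<tau>2 * r" and s2: "\<tau>2 * r \<le> 2" by auto
    have "\<tau>2 * r \<le> \<tau>1 * r" using assms r0 by simp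
    hence l1: "1 \<le> \<tau>1 * r" using s1 by simp
    have A: "2 * C0 * d * 2 powr (e - 1) \<le> (\<tau>1 * r) powr (2 * d + 1) * phi C0 d q e (\<tau>1 * r)"
      using l1 C0 d0 q0 e0 qe by (intro phi_lower) auto
    have B0: "2 * C0 * d * 2 powr (e - 1) \<le> (\<tau>2 * r) powr (2 * d + 1) * phi C0 d q e (\<tau>2 * r)"
      using s1 C0 d0 q0 e0 qe by (intro phi_lower) auto
    have "(\<tau>2 * r) powr (2 * d + 1) \<le> 2 powr (2 * d + 1)"
      using s1 s2 d0 by (intro powr_mono2) auto
    hence "(\<tau>2 * r) powr (2 * d + 1) * phi C0 d q e (\<tau>2 * r) \<le> 2 powr (2 * d + 1) * phi C0 d q e (\<tau>2 * r)"
      using C0 d0 by (intro mult_right_mono phi_nonneg) (auto simp: phi_nonneg)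
    hence "2 * C0 * d * 2 powr (e - 1) \<le> 2 powr (2 * d + 1) * phi C0 d q e (\<tau>2 * r)"
      using B0 by linarith
    hence "2 powr (- (2 * d + 1)) * (2 * C0 * d * 2 powr (e - 1)) \<le> 2 powr (- (2 * d + 1)) * (2 powr (2 * d + 1) * phi C0 d q e (\<tau>2 * r))"
      by (intro mult_left_mono) auto
    also have "2 powr (- (2 * d + 1)) * (2 powr (2 * d + 1) * phi C0 d q e (\<tau>2 * r)) = phi C0 d q e (\<tau>2 * r)"
      by (simp add: mult.assoc[symmetric] powr_add[symmetric])
    finally have B: "2 * C0 * d * 2 powr (e - 1) * 2 powr (- (2 * d + 1)) \<le> phi C0 d q e (\<tau>2 * r)"
      by (simp add: mult_ac)
    have "c = real N * unit_ball_vol (real N) * (\<tau>1 powr (- d) * \<tau>2 powr (d + 1)) *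
      ((2 * C0 * d * 2 powr (e - 1)) * (2 * C0 * d * 2 powr (e - 1) * 2 powr (- (2 * d + 1))))"
      by (simp add: c_def cL_def mult_ac)
    also have "\<dots> \<le> real N * unit_ball_vol (real N) * (\<tau>1 powr (- d) * \<tau>2 powr (d + 1)) *
      (((\<tau>1 * r) powr (2 * d + 1) * phi C0 d q e (\<tau>1 * r)) * phi C0 d q e (\<tau>2 * r))"
    proof -
      have "(2 * C0 * d * 2 powr (e - 1)) * (2 * C0 * d * 2 powr (e - 1) * 2 powr (- (2 * d + 1)))
        \<le> ((\<tau>1 * r) powr (2 * d + 1) * phi C0 d q e (\<tau>1 * r)) * phi C0 d q e (\<tau>2 * r)"
        using C0 d0 by (intro mult_mono[OF A B]) (auto simp: phi_nonneg)
      then show ?thesis using C0 d0 by (intro mult_left_mono) auto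
    qed
    also have "\<dots> = rdens N r * Gf a C0 d q e \<tau>1 \<tau>2 r"
      using r0 t1 assms by (simp add: key_identity)
    finally show ?thesis using True by simp
  next
    case False
    then show ?thesis using H_nonneg[OF t1 assms(1), of r] by simp
  qed
  have "ennreal c * ennreal (2/\<tau>2 - 1/\<tau>2) = (\<integral>\<^sup>+r. ennreal c * indicator {1/\<tau>2..2/\<tau>2} r \<partial>lborel)"
    using assms by (subst nn_integral_cmult_indicator) (auto simp: divide_right_mono)
  also have "\<dots> \<le> (\<integral>\<^sup>+r. ennreal (rdens N r * Gf a C0 d q e \<tau>1 \<tau>2 r) \<partial>lborel)"
  proof (intro nn_integral_mono)
    fix r
    have "ennreal c * indicator {1/\<tau>2..2/\<tau>2} r = ennreal (c * indicator {1/\<tau>2..2/\<tau>2} r)"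
      by (auto simp: indicator_def)
    also have "\<dots> \<le> ennreal (rdens N r * Gf a C0 d q e \<tau>1 \<tau>2 r)"
      using pw by (intro ennreal_leI)
    finally show "ennreal c * indicator {1/\<tau>2..2/\<tau>2} r \<le> ennreal (rdens N r * Gf a C0 d q e \<tau>1 \<tau>2 r)" .
  qed
  moreover have "ennreal c * ennreal (2/\<tau>2 - 1/\<tau>2) = ennreal (c * (1 / \<tau>2))"
    using c0 assms by (subst ennreal_mult[symmetric]) (auto simp: diff_divide_distrib[symmetric])
  ultimately have I: "ennreal (c * (1 / \<tau>2)) \<le> (\<integral>\<^sup>+r. ennreal (rdens N r * Gf a C0 d q e \<tau>1 \<tau>2 r) \<partial>lborel)"
    by simp
  have "c * (1 / \<tau>2) = cL * (\<tau>1 powr (- d) * (\<tau>2 powr (d + 1) / \<tau>2))"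
    by (simp add: c_def)
  also have "\<tau>2 powr (d + 1) / \<tau>2 = \<tau>2 powr d"
    using assms by (simp add: powr_add)
  also have "\<tau>1 powr (- d) * \<tau>2 powr d = (\<tau>2 / \<tau>1) powr d"
  proof -
    have "(\<tau>2 / \<tau>1) powr d = \<tau>2 powr d / \<tau>1 powr d" by (metis powr_divide less_eq_real_def assms(1) t1)
    then show ?thesis by (simp add: powr_minus field_simps)
  qed
  finally show ?thesis using I by simp
qed

end



lemma gderiv_unique:
  fixes f :: "'a::real_inner \<Rightarrow> real"
  assumes "GDERIV f x :> D1" "GDERIV f x :> D2"
  shows "D1 = D2"
proof -
  have "(\<lambda>h. h \<bullet> D1) = (\<lambda>h. h \<bullet> D2)"
    using assms unfolding gderiv_def by (rule has_derivative_unique)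
  hence "(D1 - D2) \<bullet> D1 = (D1 - D2) \<bullet> D2" by metis
  hence "(D1 - D2) \<bullet> (D1 - D2) = 0" by (simp add: inner_diff_right)
  then show ?thesis by simp
qed

lemma grad_eqI:
  fixes f :: "'a::real_inner \<Rightarrow> real"
  assumes "GDERIV f x :> D"
  shows "grad f x = D"
  unfolding grad_def using assms gderiv_unique by (intro some_equality) auto

context
  fixes N :: nat and a b :: real
  assumes N3: "N \<ge> 3" and aa: "a < a_crit N" and ab: "a \<le> b" "b < a + 1"
begin

definition "dd = a_crit N - a"
definition "pp = p_exp N a b"
definition "qq = dd * (pp - 1)"
definition "ee = - 2 / (pp - 1)"
definition "CC = (2 * (pp + 1) * dd\<^sup>2) powr (1 / (pp - 1))"

lemma pp_gt1: "1 < pp"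
proof -
  have "real N \<ge> 3" using N3 by simp
  hence den: "0 < real N - 2 * (1 + a - b)" using ab by (smt (verit))
  have "real N - 2 * (1 + a - b) < real N + 2 * (1 + a - b)" using ab by (smt (verit))
  then show ?thesis using den by (simp add: pp_def p_exp_def)
qed

lemma dd_pos: "0 < dd" using aa by (simp add: dd_def)
lemma qq_pos: "0 < qq" using dd_pos pp_gt1 by (simp add: qq_def)
lemma ee_neg: "ee < 0" using pp_gt1 by (simp add: ee_def)
lemma qe: "qq * ee = - 2 * dd" using pp_gt1 by (simp add: qq_def ee_def field_simps)
lemma CC_pos: "0 < CC" using dd_pos pp_gt1 by (simp add: CC_def)
lemma dN: "2 * dd + 1 = real N - 1 - 2 * a" by (simp add: dd_def a_crit_def field_simps)

lemma W_tau_eq: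
  assumes "0 < \<tau>"
  shows "W_tau N a b \<tau> x = \<tau> powr dd * (CC * (1 + (\<tau> * norm x) powr qq) powr ee)"
  using assms unfolding W_tau_def W_fun_def Let_def
  by (simp add: dd_def pp_def qq_def ee_def CC_def)

lemma grad_W:
  fixes x :: "'a::euclidean_space"
  assumes "0 < \<tau>" "x \<noteq> 0"
  shows "grad (W_tau N a b \<tau>) x = (\<tau> powr dd * (- (\<tau> * phi CC dd qq ee (\<tau> * norm x)))) *\<^sub>R sgn x"
proof -
  define g where "g r = \<tau> powr dd * (CC * (1 + (\<tau> * r) powr qq) powr ee)" for r
  have feq: "W_tau N a b \<tau> = (\<lambda>x::'a. g (norm x))"
    using assms by (auto simp: W_tau_eq g_def)
  have "DERIV g (norm x) :> \<tau> powr dd * (- (\<tau> * phi CC dd qq ee (\<tau> * norm x)))"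
    unfolding g_def using assms qe by (intro DERIV_cmult phi_deriv) auto
  from GDERIV_DERIV_compose[OF GDERIV_norm[OF assms(2)] this]
  show ?thesis unfolding feq by (rule grad_eqI)
qed

lemma integrand_eq:
  fixes x :: "'a::euclidean_space"
  assumes "0 < \<tau>1" "0 < \<tau>2"
  shows "norm x powr (- 2 * a) * (grad (W_tau N a b \<tau>1) x \<bullet> grad (W_tau N a b \<tau>2) x)
    = Gf a CC dd qq ee \<tau>1 \<tau>2 (norm x)"
proof (cases "x = 0")
  case True then show ?thesis by (simp add: Gf_def)
next
  case False
  have s: "sgn x \<bullet> sgn x = 1" using False by (simp add: dot_square_norm norm_sgn)
  show ?thesis using False assms
    by (simp add: grad_W Gf_def s mult_ac)
qed

lemma D12_eq:
  assumes "DIM('a::euclidean_space) = N" "0 < \<tau>1" "0 < \<tau>2"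
  shows "D12a_inner a (W_tau N a b \<tau>1 :: 'a \<Rightarrow> real) (W_tau N a b \<tau>2)
    = enn2real (\<integral>\<^sup>+r. ennreal (rdens N r * Gf a CC dd qq ee \<tau>1 \<tau>2 r) \<partial>lborel)"
proof -
  have Gnn: "0 \<le> Gf a CC dd qq ee \<tau>1 \<tau>2 r" for r
    using assms CC_pos dd_pos by (auto simp: Gf_def phi_nonneg intro!: mult_nonneg_nonneg)
  have "D12a_inner a (W_tau N a b \<tau>1 :: 'a \<Rightarrow> real) (W_tau N a b \<tau>2)
     = (\<integral>x. Gf a CC dd qq ee \<tau>1 \<tau>2 (norm (x::'a)) \<partial>lborel)"
  proof -
    have "(\<lambda>x::'a. norm x powr (- 2 * a) * (grad (W_tau N a b \<tau>1) x \<bullet> grad (W_tau N a b \<tau>2) x))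
      = (\<lambda>x. Gf a CC dd qq ee \<tau>1 \<tau>2 (norm x))"
      by (rule ext, rule integrand_eq[OF assms(2,3)])
    then show ?thesis unfolding D12a_inner_def by simp
  qed
  also have "\<dots> = enn2real (\<integral>\<^sup>+x. ennreal (Gf a CC dd qq ee \<tau>1 \<tau>2 (norm (x::'a))) \<partial>lborel)"
    using Gnn by (intro integral_eq_nn_integral) auto
  also have "(\<integral>\<^sup>+x. ennreal (Gf a CC dd qq ee \<tau>1 \<tau>2 (norm (x::'a))) \<partial>lborel)
      = (\<integral>\<^sup>+r. ennreal (rdens DIM('a) r) * ennreal (Gf a CC dd qq ee \<tau>1 \<tau>2 r) \<partial>lborel)"
    by (rule radial_nn_integral) measurable
  also have "\<dots> = (\<integral>\<^sup>+r. ennreal (rdens N r * Gf a CC dd qq ee \<tau>1 \<tau>2 r) \<partial>lborel)"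
    using assms Gnn by (intro nn_integral_cong) (simp add: ennreal_mult rdens_nonneg)
  finally show ?thesis .
qed

end



theorem lemma5p2:
  fixes N :: nat and a b :: real
  assumes "DIM('a::euclidean_space) = N"
    and "N \<ge> 3"
    and "a < a_crit N"
    and "a \<le> b" and "b < a + 1"
  shows "\<exists>c1 c2. 0 < c1 \<and> c1 \<le> c2 \<and>
    (\<forall>\<tau>1 \<tau>2. 0 < \<tau>1 \<longrightarrow> 0 < \<tau>2 \<longrightarrow> \<tau>1 \<noteq> \<tau>2 \<longrightarrow>
      c1 * (min \<tau>1 \<tau>2 / max \<tau>1 \<tau>2) powr (a_crit N - a)
        \<le> D12a_inner a (W_tau N a b \<tau>1 :: 'a \<Rightarrow> real) (W_tau N a b \<tau>2) \<and>
      D12a_inner a (W_tau N a b \<tau>1 :: 'a \<Rightarrow> real) (W_tau N a b \<tau>2)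
        \<le> c2 * (min \<tau>1 \<tau>2 / max \<tau>1 \<tau>2) powr (a_crit N - a))"
proof -
  note P = assms(2-5)
  define d where "d = dd N a"
  define q where "q = qq N a b"
  define e where "e = ee N a b"
  define C where "C = CC N a b"
  have dN': "2 * d + 1 = real N - 1 - 2 * a" unfolding d_def by (rule dN[OF P])
  have N1: "1 \<le> N" using P by simp
  have d0: "0 < d" unfolding d_def by (rule dd_pos[OF P])
  have q0: "0 < q" unfolding q_def by (rule qq_pos[OF P])
  have e0: "e < 0" unfolding e_def by (rule ee_neg[OF P])
  have qe': "q * e = - 2 * d" unfolding q_def e_def d_def by (rule qe[OF P])
  have C0: "0 < C" unfolding C_def by (rule CC_pos[OF P])
  have dA: "d = a_crit N - a" by (simp add: d_def dd_def[OF P])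
  define K2 where "K2 = c2 N d C"
  define KL where "KL = cL N d e C"
  have K2pos: "0 < K2" unfolding K2_def by (rule c2_pos[OF dN' N1 d0 q0 e0 qe' C0])
  have KLpos: "0 < KL" unfolding KL_def by (rule cL_pos[OF dN' N1 d0 q0 e0 qe' C0])
  define J where "J t1 t2 = (\<integral>\<^sup>+r. ennreal (rdens N r * Gf a C d q e t1 t2 r) \<partial>lborel)" for t1 t2
  have D: "D12a_inner a (W_tau N a b t1 :: 'a \<Rightarrow> real) (W_tau N a b t2) = enn2real (J t1 t2)"
    if "0 < t1" "0 < t2" for t1 t2
    unfolding J_def C_def d_def q_def e_def by (rule D12_eq[OF P assms(1) that])
  have Jsym: "J t1 t2 = J t2 t1" for t1 t2
    unfolding J_def by (simp add: Gf_sym[of a C d q e t1 t2])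
  show ?thesis
  proof (intro exI conjI allI impI)
    show "0 < min KL K2" using KLpos K2pos by simp
    show "min KL K2 \<le> K2" by simp
    fix \<tau>1 \<tau>2 :: real
    assume t: "0 < \<tau>1" "0 < \<tau>2" "\<tau>1 \<noteq> \<tau>2"
    define s where "s = min \<tau>1 \<tau>2"
    define l where "l = max \<tau>1 \<tau>2"
    have s0: "0 < s" and sl: "s < l" using t by (auto simp: s_def l_def)
    have Jeq: "J \<tau>1 \<tau>2 = J l s"
      using t Jsym by (cases "\<tau>2 < \<tau>1") (auto simp: s_def l_def min_def max_def)
    have up: "J l s \<le> ennreal (K2 * (s / l) powr d)"
      unfolding J_def K2_def by (rule J_upper[OF dN' N1 d0 q0 e0 qe' C0 s0 sl])
    have lo: "ennreal (KL * (s / l) powr d) \<le> J l s"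
      unfolding J_def KL_def by (rule J_lower[OF dN' N1 d0 q0 e0 qe' C0 s0 sl])
    have fin: "J l s < top" using up by (simp add: le_less_trans)
    have nn: "0 \<le> (s / l) powr d" by simp
    have U: "enn2real (J l s) \<le> K2 * (s / l) powr d"
      using enn2real_mono[OF up] K2pos nn by simp
    have L: "KL * (s / l) powr d \<le> enn2real (J l s)"
      using enn2real_mono[OF lo fin] KLpos nn by simp
    have M: "min KL K2 * (s / l) powr d \<le> KL * (s / l) powr d"
      using nn by (intro mult_right_mono) auto
    show "min KL K2 * (min \<tau>1 \<tau>2 / max \<tau>1 \<tau>2) powr (a_crit N - a)
        \<le> D12a_inner a (W_tau N a b \<tau>1 :: 'a \<Rightarrow> real) (W_tau N a b \<tau>2)"
      using D[OF t(1,2)] Jeq L M by (simp add: s_def l_def dA)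
    show "D12a_inner a (W_tau N a b \<tau>1 :: 'a \<Rightarrow> real) (W_tau N a b \<tau>2)
        \<le> K2 * (min \<tau>1 \<tau>2 / max \<tau>1 \<tau>2) powr (a_crit N - a)"
      using D[OF t(1,2)] Jeq U by (simp add: s_def l_def dA)
  qed
qed


end
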